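(* In Model B below, assume $l\mid d$, $l\to\infty$ and $lp\to0$ as $d\to\infty$. Then for the $c$-segmentation rule with $c=d/l$, $$\mathbb{P}(w\text{ is misclassified})\to0\quad\text{as }d\to\infty.$$
   Context: Segmentation rule. Let $d,c$ be positive integers with $c\mid d$. For $x\in\mathbb{R}^d$ and $1\le j\le c$ let $x_j\in\mathbb{R}^{d/c}$ denote its $j$-th block $(x_{(j-1)d/c+1},\dots,x_{jd/c})$, so that $x=x_1\circ\cdots\circ x_c$ (concatenation). Given dictionary words $w^1,\dots,w^K\in\mathbb{R}^d$ ($w^k$ representing class $k$) and a test word $w\in\mathbb{R}^d$, for each $j$ let $U_j\in\{1,\dots,K\}$ be an index $k$ minimizing the Euclidean distance $\|w_j-w^k_j\|$ in $\mathbb{R}^{d/c}$, chosen uniformly at random among all minimizers (independently of everything else). The $c$-segmentation rule assigns to $w$ the class $\chi(w)\in\operatorname{argmax}_k\#\{j:U_j=k\}$, chosen uniformly at random among all maximizers. The case $c=1$ is the Euclidean (nearest-neighbour) rule and $c=d$ is coordinate-by-coordinate comparison. $w$ is classified correctly if $\chi(w)$ equals its true class, misclassified otherwise. Probabilities are over all random objects including tie-breaks. Model B. Let $d\ge1$, an integer $l\ge1$, $N>0$ and $p\in(0,1)$ be given (the last three may depend on $d$). Let $m_1=0\in\mathbb{R}^d$ and let $m_2\in\mathbb{R}^d$ have $(m_2)_i=1$ if $i\equiv1\pmod l$ and $(m_2)_i=0$ otherwise. Let $Y^{(0)},Y^{(1)},Y^{(2)}$ be independent random vectors in $\mathbb{R}^d$,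 each with i.i.d. coordinates satisfying $\mathbb{P}(Y_i=N)=p$, $\mathbb{P}(Y_i=0)=1-p$. There are $K=2$ classes; the dictionary words are $w^1=m_1+Y^{(1)}$ (class 1) and $w^2=m_2+Y^{(2)}$ (class 2), and the test word is $w=m_1+Y^{(0)}$ (true class 1). *)

theory Defs
  imports "HOL-Probability.Probability"
begin

text \<open>Vectors in R^d are represented as functions nat => real; coordinate i
  (0-indexed, i < d) corresponds to the paper's coordinate i+1.
  Blocks are 0-indexed: block j (j < c) consists of coordinates
  j*(d div c) ..< (j+1)*(d div c).\<close>

definition block_dist :: "nat \<Rightarrow> nat \<Rightarrow> nat \<Rightarrow> (nat \<Rightarrow> real) \<Rightarrow> (nat \<Rightarrow> real) \<Rightarrow> real" where
  "block_dist d c j x y =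
     sqrt (\<Sum>i<d div c. (x (j * (d div c) + i) - y (j * (d div c) + i))^2)"

definition nearest_set :: "nat \<Rightarrow> nat \<Rightarrow> nat \<Rightarrow> (nat \<Rightarrow> nat \<Rightarrow> real) \<Rightarrow> (nat \<Rightarrow> real) \<Rightarrow> nat \<Rightarrow> nat set" where
  "nearest_set d c K W w j =
     {k \<in> {1..K}. \<forall>k'\<in>{1..K}. block_dist d c j w (W k) \<le> block_dist d c j w (W k')}"

definition vote_count :: "nat \<Rightarrow> (nat \<Rightarrow> nat) \<Rightarrow> nat \<Rightarrow> nat" where
  "vote_count c U k = card {j. j < c \<and> U j = k}"

definition argmax_set :: "nat \<Rightarrow> nat \<Rightarrow> (nat \<Rightarrow> nat) \<Rightarrow> nat set" where
  "argmax_set c K U = {k \<in> {1..K}. \<forall>k'\<in>{1..K}. vote_count c U k' \<le> vote_count c U k}"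

definition seg_rule :: "nat \<Rightarrow> nat \<Rightarrow> nat \<Rightarrow> (nat \<Rightarrow> nat \<Rightarrow> real) \<Rightarrow> (nat \<Rightarrow> real) \<Rightarrow> nat pmf" where
  "seg_rule d c K W w =
     do { U \<leftarrow> Pi_pmf {..<c} 0 (\<lambda>j. pmf_of_set (nearest_set d c K W w j));
          pmf_of_set (argmax_set c K U) }"

definition coord_pmf :: "real \<Rightarrow> real \<Rightarrow> real pmf" where
  "coord_pmf N p = map_pmf (\<lambda>b. if b then N else 0) (bernoulli_pmf p)"

definition noise_vec :: "nat \<Rightarrow> real \<Rightarrow> real \<Rightarrow> (nat \<Rightarrow> real) pmf" where
  "noise_vec d N p = Pi_pmf {..<d} 0 (\<lambda>_. coord_pmf N p)"

text \<open>Model B means: m1 = 0, m2 has entry 1 at paper-coordinates i = 1 mod l,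
  i.e. at 0-indexed coordinates i with i mod l = 0.\<close>
definition m2B :: "nat \<Rightarrow> nat \<Rightarrow> nat \<Rightarrow> real" where
  "m2B d l i = (if i < d \<and> i mod l = 0 then 1 else 0)"

definition misclass_B :: "nat \<Rightarrow> nat \<Rightarrow> nat \<Rightarrow> real \<Rightarrow> real \<Rightarrow> real" where
  "misclass_B d c l N p =
     measure_pmf.prob
       (do { Y0 \<leftarrow> noise_vec d N p;
             Y1 \<leftarrow> noise_vec d N p;
             Y2 \<leftarrow> noise_vec d N p;
             seg_rule d c 2 (\<lambda>k. if k = 1 then Y1 else (\<lambda>i. m2B d l i + Y2 i)) Y0 })
       {k. k \<noteq> 1}"

end

theory Submission imports Defs begin

lemma coord_marg:
  assumes "x < d" "N \<noteq> 0" "0 \<le> p" "p \<le> 1"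
  shows "emeasure (measure_pmf (noise_vec d N p)) {a. a x \<noteq> 0} = ennreal p"
proof -
  have "emeasure (measure_pmf (noise_vec d N p)) {a. a x \<noteq> 0}
      = emeasure (measure_pmf (map_pmf (\<lambda>f. f x) (noise_vec d N p))) {y. y \<noteq> 0}"
    by (simp add: emeasure_map_pmf vimage_def)
  also have "map_pmf (\<lambda>f. f x) (noise_vec d N p) = coord_pmf N p"
    unfolding noise_vec_def using assms by (simp add: Pi_pmf_component)
  also have "emeasure (measure_pmf (coord_pmf N p)) {y. y \<noteq> 0}
      = emeasure (measure_pmf (bernoulli_pmf p)) {True}"
    unfolding coord_pmf_def emeasure_map_pmf using assms
    by (intro arg_cong[where f="emeasure _"]) auto
  also have "\<dots> = ennreal p"
    using assms by (simp add: measure_pmf.emeasure_eq_measure measure_pmf_single)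
  finally show ?thesis .
qed

lemma nested_pair:
  "bind_pmf M (\<lambda>a. bind_pmf M (\<lambda>b. bind_pmf M (\<lambda>e. S a b e)))
   = bind_pmf (pair_pmf M (pair_pmf M M)) (\<lambda>t. S (fst t) (fst (snd t)) (snd (snd t)))"
  by (simp add: pair_pmf_def bind_assoc_pmf bind_return_pmf)

lemma marg_J:
  fixes M :: "(nat \<Rightarrow> real) pmf"
  shows "emeasure (measure_pmf (pair_pmf M (pair_pmf M M))) {t. fst t x \<noteq> 0} = emeasure (measure_pmf M) {a. a x \<noteq> 0}"
    "emeasure (measure_pmf (pair_pmf M (pair_pmf M M))) {t. fst (snd t) x \<noteq> 0} = emeasure (measure_pmf M) {a. a x \<noteq> 0}"
    "emeasure (measure_pmf (pair_pmf M (pair_pmf M M))) {t. snd (snd t) x \<noteq> 0} = emeasure (measure_pmf M) {a. a x \<noteq> 0}"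
proof -
  let ?J = "pair_pmf M (pair_pmf M M)"
  have m1: "map_pmf fst ?J = M" by (rule map_fst_pair_pmf)
  have m2: "map_pmf (\<lambda>t. fst (snd t)) ?J = M"
  proof -
    have "map_pmf (\<lambda>t. fst (snd t)) ?J = map_pmf fst (map_pmf snd ?J)" by (simp add: pmf.map_comp o_def)
    then show ?thesis by (simp add: map_snd_pair_pmf map_fst_pair_pmf)
  qed
  have m3: "map_pmf (\<lambda>t. snd (snd t)) ?J = M"
  proof -
    have "map_pmf (\<lambda>t. snd (snd t)) ?J = map_pmf snd (map_pmf snd ?J)" by (simp add: pmf.map_comp o_def)
    then show ?thesis by (simp add: map_snd_pair_pmf)
  qed
  have "emeasure (measure_pmf ?J) {t. fst t x \<noteq> 0} = emeasure (measure_pmf (map_pmf fst ?J)) {a. a x \<noteq> 0}"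
    by (simp only: emeasure_map_pmf vimage_def) simp
  then show "emeasure (measure_pmf ?J) {t. fst t x \<noteq> 0} = emeasure (measure_pmf M) {a. a x \<noteq> 0}" by (simp only: m1)
  have "emeasure (measure_pmf ?J) {t. fst (snd t) x \<noteq> 0} = emeasure (measure_pmf (map_pmf (\<lambda>t. fst (snd t)) ?J)) {a. a x \<noteq> 0}"
    by (simp only: emeasure_map_pmf vimage_def) simp
  then show "emeasure (measure_pmf ?J) {t. fst (snd t) x \<noteq> 0} = emeasure (measure_pmf M) {a. a x \<noteq> 0}" by (simp only: m2)
  have "emeasure (measure_pmf ?J) {t. snd (snd t) x \<noteq> 0} = emeasure (measure_pmf (map_pmf (\<lambda>t. snd (snd t)) ?J)) {a. a x \<noteq> 0}"
    by (simp only: emeasure_map_pmf vimage_def) simp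
  then show "emeasure (measure_pmf ?J) {t. snd (snd t) x \<noteq> 0} = emeasure (measure_pmf M) {a. a x \<noteq> 0}" by (simp only: m3)
qed

lemma nearest_props:
  shows "nearest_set d c 2 W w j \<subseteq> {1,2}" "nearest_set d c 2 W w j \<noteq> {}"
proof -
  show "nearest_set d c 2 W w j \<subseteq> {1,2}" unfolding nearest_set_def by auto
  show "nearest_set d c 2 W w j \<noteq> {}"
  proof (cases "block_dist d c j w (W 1) \<le> block_dist d c j w (W 2)")
    case True
    then have "1 \<in> nearest_set d c 2 W w j" unfolding nearest_set_def
      by (auto simp: le_Suc_eq numeral_2_eq_2)
    then show ?thesis by auto
  next
    case False
    then have "2 \<in> nearest_set d c 2 W w j" unfolding nearest_set_def
      by (auto simp: le_Suc_eq numeral_2_eq_2)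
    then show ?thesis by auto
  qed
qed

lemma good_block:
  assumes d: "d = c * l" and j: "j < c" and l: "l \<ge> 1"
    and good: "\<forall>i<l. a (j*l+i) = 0 \<and> b (j*l+i) = 0 \<and> e (j*l+i) = 0"
  shows "nearest_set d c 2 (\<lambda>k. if k = 1 then b else (\<lambda>i. m2B d l i + e i)) a j = {1}"
proof -
  let ?W = "\<lambda>k::nat. if k = 1 then b else (\<lambda>i. m2B d l i + e i)"
  have dc: "d div c = l" using d j by simp
  have d1: "block_dist d c j a (?W 1) = 0"
    unfolding block_dist_def dc using good by simp
  have "(1::real) \<le> (\<Sum>i<l. (a (j*l+i) - ?W 2 (j*l+i))^2)"
  proof -
    have "(a (j*l+0) - ?W 2 (j*l+0))^2 = 1"
    proof -
      have "j*l < d" using d j l by simp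
      moreover have "a (j*l) = 0" "e (j*l) = 0" using good[rule_format, of 0] l by auto
      ultimately show ?thesis by (simp add: m2B_def)
    qed
    moreover have "(a (j*l+0) - ?W 2 (j*l+0))^2 \<le> (\<Sum>i<l. (a (j*l+i) - ?W 2 (j*l+i))^2)"
      by (rule member_le_sum) (use l in auto)
    ultimately show ?thesis by simp
  qed
  then have d2: "block_dist d c j a (?W 2) > 0"
    unfolding block_dist_def dc by simp
  show ?thesis
    unfolding nearest_set_def using d1 d2
    by (auto simp: le_Suc_eq numeral_2_eq_2)
qed

lemma seg_ok:
  assumes d: "d = c * l" and l: "l \<ge> 1"
    and few: "2 * card {j. j < c \<and> \<not> (\<forall>i<l. a (j*l+i) = 0 \<and> b (j*l+i) = 0 \<and> e (j*l+i) = 0)} < c"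
  shows "set_pmf (seg_rule d c 2 (\<lambda>k. if k = 1 then b else (\<lambda>i. m2B d l i + e i)) a) \<subseteq> {1}"
proof -
  let ?W = "\<lambda>k::nat. if k = 1 then b else (\<lambda>i. m2B d l i + e i)"
  define bad where "bad j \<longleftrightarrow> \<not> (\<forall>i<l. a (j*l+i) = 0 \<and> b (j*l+i) = 0 \<and> e (j*l+i) = 0)" for j
  define B where "B = {j. j < c \<and> bad j}"
  have fin_ns: "finite (nearest_set d c 2 ?W a j)" for j
    using nearest_props(1)[of d c ?W a j] finite_subset by blast
  have am: "argmax_set c 2 U = {1}" if U: "U \<in> set_pmf (Pi_pmf {..<c} 0 (\<lambda>j. pmf_of_set (nearest_set d c 2 ?W a j)))" for U
  proof -
    have Uj: "U j \<in> nearest_set d c 2 ?W a j" if "j < c" for j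
    proof -
      have "U j \<in> set_pmf (pmf_of_set (nearest_set d c 2 ?W a j))"
        using U that by (auto simp: set_Pi_pmf PiE_dflt_def)
      then show ?thesis using fin_ns[of j] nearest_props(2)[of d c ?W a j] by simp
    qed
    have good1: "U j = 1" if "j < c" "\<not> bad j" for j
      using Uj[OF that(1)] good_block[OF d that(1) l, of a b e] that(2) unfolding bad_def by auto
    have s2: "{j. j < c \<and> U j = 2} \<subseteq> B"
      using good1 unfolding B_def by force
    have s1: "{..<c} - B \<subseteq> {j. j < c \<and> U j = 1}"
      using good1 unfolding B_def by auto
    have BC: "B \<subseteq> {..<c}" unfolding B_def by auto
    have cB: "card ({..<c} - B) = c - card B"
      using BC by (simp add: card_Diff_subset finite_subset)
    have v2: "vote_count c U 2 \<le> card B"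
      unfolding vote_count_def by (rule card_mono[OF _ s2]) (simp add: B_def)
    have v1: "c - card B \<le> vote_count c U 1"
      proof -
      have "card ({..<c} - B) \<le> card {j. j < c \<and> U j = 1}"
        by (rule card_mono[OF _ s1]) simp
      then show ?thesis unfolding vote_count_def using cB by simp
    qed
    have "2 * card B < c" using few unfolding B_def bad_def by simp
    then have lt: "vote_count c U 2 < vote_count c U 1" using v1 v2 by linarith
    show ?thesis
    proof -
      have "{1..2::nat} = {1,2}" by auto
      then show ?thesis unfolding argmax_set_def using lt by auto
    qed
  qed
  show ?thesis
    unfolding seg_rule_def using am by auto
qed

lemma main_bound:
  assumes d: "d = c * l" and c: "c \<ge> 1" and l: "l \<ge> 1" and N: "N \<noteq> 0"
    and p0: "0 \<le> p" and p1: "p \<le> 1"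
  shows "misclass_B d c l N p \<le> 6 * l * p"
proof -
  define M where "M = noise_vec d N p"
  define J where "J = pair_pmf M (pair_pmf M M)"
  define S where "S = (\<lambda>a b e. seg_rule d c 2 (\<lambda>k. if k = 1 then b else (\<lambda>i. m2B d l i + e i)) a)"
  define z where "z = (\<lambda>x t. indicator {t::(nat\<Rightarrow>real)\<times>(nat\<Rightarrow>real)\<times>(nat\<Rightarrow>real). fst t x \<noteq> 0} t
       + indicator {t::(nat\<Rightarrow>real)\<times>(nat\<Rightarrow>real)\<times>(nat\<Rightarrow>real). fst (snd t) x \<noteq> 0} t
       + indicator {t::(nat\<Rightarrow>real)\<times>(nat\<Rightarrow>real)\<times>(nat\<Rightarrow>real). snd (snd t) x \<noteq> 0} t :: ennreal)"
  define F where "F = (\<lambda>t. ennreal (2 / c) * (\<Sum>j<c. \<Sum>i<l. z (j*l+i) t))"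
  have mis: "misclass_B d c l N p = measure (measure_pmf (bind_pmf J (\<lambda>t. S (fst t) (fst (snd t)) (snd (snd t))))) {k. k \<noteq> 1}"
    unfolding misclass_B_def J_def S_def M_def by (simp only: nested_pair)
  have pw: "emeasure (measure_pmf (S (fst t) (fst (snd t)) (snd (snd t)))) {k. k \<noteq> 1} \<le> F t" for t
  proof -
    obtain a b e where t: "t = (a, b, e)" by (cases t) auto
    define B where "B = {j. j < c \<and> \<not> (\<forall>i<l. a (j*l+i) = 0 \<and> b (j*l+i) = 0 \<and> e (j*l+i) = 0)}"
    show ?thesis
    proof (cases "2 * card B < c")
      case True
      have "set_pmf (S a b e) \<subseteq> {1}"
        unfolding S_def by (rule seg_ok[OF d l True[unfolded B_def]])
      then have "measure (measure_pmf (S a b e)) {k. k \<noteq> 1} = 0"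
        by (subst measure_pmf_zero_iff) auto
      then show ?thesis unfolding t by (simp add: measure_pmf.emeasure_eq_measure)
    next
      case False
      have "emeasure (measure_pmf (S a b e)) {k. k \<noteq> 1} \<le> 1"
        by (rule measure_pmf.emeasure_le_1)
      also have "1 \<le> F t"
      proof -
        have BC: "B \<subseteq> {..<c}" unfolding B_def by auto
        have inner: "1 \<le> (\<Sum>i<l. z (j*l+i) t)" if "j \<in> B" for j
        proof -
          from that obtain i where i: "i < l" "a (j*l+i) \<noteq> 0 \<or> b (j*l+i) \<noteq> 0 \<or> e (j*l+i) \<noteq> 0"
            unfolding B_def by auto
          have "1 \<le> z (j*l+i) t" using i(2) unfolding z_def t by (auto simp: indicator_def)
          also have "\<dots> \<le> (\<Sum>i<l. z (j*l+i) t)"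
            by (rule member_le_sum) (use i in auto)
          finally show ?thesis .
        qed
        have "of_nat (card B) = (\<Sum>j\<in>B. (1::ennreal))" by simp
        also have "\<dots> \<le> (\<Sum>j\<in>B. \<Sum>i<l. z (j*l+i) t)"
          by (rule sum_mono) (rule inner)
        also have "\<dots> \<le> (\<Sum>j<c. \<Sum>i<l. z (j*l+i) t)"
          by (rule sum_mono2) (use BC in auto)
        finally have cb: "of_nat (card B) \<le> (\<Sum>j<c. \<Sum>i<l. z (j*l+i) t)" .
        have "(1::ennreal) = ennreal (2 / c * (c / 2))" using c by simp
        also have "\<dots> \<le> ennreal (2 / c * card B)"
          using False c by (intro ennreal_leI mult_left_mono) auto
        also have "\<dots> = ennreal (2 / c) * ennreal (card B)"
          by (rule ennreal_mult) auto
        also have "\<dots> = ennreal (2 / c) * of_nat (card B)"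
          by (simp add: ennreal_of_nat_eq_real_of_nat)
        also have "\<dots> \<le> F t" unfolding F_def
          by (rule mult_left_mono[OF cb]) simp
        finally show ?thesis .
      qed
      finally show ?thesis unfolding t by simp
    qed
  qed
  have zint: "(\<integral>\<^sup>+t. z x t \<partial>measure_pmf J) = ennreal (3 * p)" if "x < d" for x
  proof -
    have "(\<integral>\<^sup>+t. z x t \<partial>measure_pmf J) = ennreal p + ennreal p + ennreal p"
      unfolding z_def J_def
      by (simp add: nn_integral_add marg_J coord_marg[OF that N p0 p1, folded M_def])
    also have "\<dots> = ennreal (3 * p)" using p0 by (simp add: ennreal_plus[symmetric])
    finally show ?thesis .
  qed
  have "emeasure (measure_pmf (bind_pmf J (\<lambda>t. S (fst t) (fst (snd t)) (snd (snd t))))) {k. k \<noteq> 1}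
      = (\<integral>\<^sup>+t. emeasure (measure_pmf (S (fst t) (fst (snd t)) (snd (snd t)))) {k. k \<noteq> 1} \<partial>measure_pmf J)"
    by simp
  also have "\<dots> \<le> (\<integral>\<^sup>+t. F t \<partial>measure_pmf J)"
    by (rule nn_integral_mono) (rule pw)
  also have "\<dots> = ennreal (2 / c) * (\<Sum>j<c. \<Sum>i<l. (\<integral>\<^sup>+t. z (j*l+i) t \<partial>measure_pmf J))"
    unfolding F_def by (simp add: nn_integral_cmult nn_integral_sum)
  also have "\<dots> = ennreal (2 / c) * (\<Sum>j<c. \<Sum>i<l. ennreal (3 * p))"
  proof -
    have "j*l+i < d" if "j < c" "i < l" for j i
    proof -
      have "j*l+i < j*l+l" using that by simp
      also have "\<dots> = (j+1)*l" by simp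
      also have "\<dots> \<le> c*l" using that by (intro mult_right_mono) auto
      finally show ?thesis using d by simp
    qed
    then show ?thesis by (simp add: zint)
  qed
  also have "\<dots> = ennreal (6 * l * p)"
    using c p0 by (simp add: ennreal_of_nat_eq_real_of_nat ennreal_mult[symmetric] field_simps)
  finally have "emeasure (measure_pmf (bind_pmf J (\<lambda>t. S (fst t) (fst (snd t)) (snd (snd t))))) {k. k \<noteq> 1} \<le> ennreal (6 * l * p)" .
  then show ?thesis unfolding mis using p0
    by (simp add: measure_pmf.emeasure_eq_measure ennreal_le_iff)
qed

theorem proposition4:
  fixes l :: "nat \<Rightarrow> nat" and N p :: "nat \<Rightarrow> real"
  assumes l_pos: "\<And>d. d \<ge> 1 \<Longrightarrow> l d \<ge> 1"
    and l_dvd: "\<And>d. d \<ge> 1 \<Longrightarrow> l d dvd d"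
    and N_pos: "\<And>d. d \<ge> 1 \<Longrightarrow> N d > 0"
    and p_pos: "\<And>d. d \<ge> 1 \<Longrightarrow> 0 < p d"
    and p_lt1: "\<And>d. d \<ge> 1 \<Longrightarrow> p d < 1"
    and l_inf: "filterlim l at_top sequentially"
    and lp_0: "(\<lambda>d. real (l d) * p d) \<longlonglongrightarrow> 0"
  shows "(\<lambda>d. misclass_B d (d div l d) (l d) (N d) (p d)) \<longlonglongrightarrow> 0"
proof (rule Lim_null_comparison)
  show "\<forall>\<^sub>F d in sequentially. norm (misclass_B d (d div l d) (l d) (N d) (p d)) \<le> 6 * (real (l d) * p d)"
  proof (rule eventually_sequentiallyI[of 1])
    fix d :: nat assume d: "1 \<le> d"
    have lpos: "l d \<ge> 1" using l_pos d by simp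
    have dv: "l d dvd d" using l_dvd d by simp
    have dd: "d = (d div l d) * l d" using dv by simp
    have "l d \<le> d" using dv d by (simp add: dvd_imp_le)
    then have c1: "d div l d \<ge> 1" using lpos by (metis div_le_mono div_self not_one_le_zero)
    have b: "misclass_B d (d div l d) (l d) (N d) (p d) \<le> 6 * real (l d) * p d"
      by (rule main_bound[OF dd c1 lpos]) (use N_pos[OF d] p_pos[OF d] p_lt1[OF d] in auto)
    have nn: "0 \<le> misclass_B d (d div l d) (l d) (N d) (p d)"
      unfolding misclass_B_def by simp
    show "norm (misclass_B d (d div l d) (l d) (N d) (p d)) \<le> 6 * (real (l d) * p d)"
      using b nn by simp
  qed
  show "(\<lambda>d. 6 * (real (l d) * p d)) \<longlonglongrightarrow> 0"
    using tendsto_mult[OF tendsto_const lp_0, of 6] by simp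
qed

end
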